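(* Let $X,Y$ be compact metric spaces and let $\mathcal G\subset\mathrm{Homeo}(X)$, $\mathcal H\subset\mathrm{Homeo}(Y)$ be finitely generated pseudogroups strongly isomorphic via a homeomorphism $\varphi:X\to Y$; let $\mathcal G_1$ be a finite generating set of $\mathcal G$ and $\mathcal H_1=\{\varphi\circ g\circ\varphi^{-1}:g\in\mathcal G_1\}$. Then for every Borel probability measure $\mu$ on $X$ and every $x\in X$, $\underline{h}_\mu((\mathcal G,\mathcal G_1),x)=\underline{h}_{\varphi_*\mu}((\mathcal H,\mathcal H_1),\varphi(x))$.
   Context: $\mathrm{Homeo}(X)$: homeomorphisms $g:D_g\to R_g$ between open subsets of $X$, composed on natural domains $D_{h\circ g}=g^{-1}(D_h)$. A pseudogroup is a subset of $\mathrm{Homeo}(X)$ containing $\mathrm{id}_X$, closed under composition, inversion, restriction to open subsets, and gluing along open covers of the domain; $\Gamma$ generates $\mathcal G$ if $\bigcup_{g\in\Gamma}(D_g\cup R_g)=X$ and $\mathcal G$ is exactly the set of $g\in\mathrm{Homeo}(X)$ locally equal near each point of $D_g$ to a finite composition of elements of $\Gamma$ and their inverses. $\mathcal G,\mathcal H$ are strongly isomorphic via $\varphi$ if for every $f\in\mathrm{Homeo}(X)$: $\varphi\circ f\circ\varphi^{-1}\in\mathcal H$ iff $f\in\mathcal G$. For a pseudogroup with finite generating set $\Gamma$: $\Gamma_n=\{g_1\circ\cdots\circ g_n:g_i\in\Gamma\}$, $\Gamma_n^x=\{g\in\Gamma_n:x\in D_g\}$, $B_n(x,\varepsilon)=\{y: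 d(g(x),g(y))<\varepsilon\ \forall g\in\Gamma_n^x\cap\Gamma_n^y\}$, and the local lower measure entropy of a measure $\nu$ is $\underline{h}_\nu((\cdot,\Gamma),x)=\lim_{\varepsilon\to0}\liminf_{n\to\infty}-\frac1n\log\nu(B_n(x,\varepsilon))$. $\varphi_*\mu=\mu\circ\varphi^{-1}$. *)

theory Defs
  imports "HOL-Probability.Probability"
begin

text \<open>Elements of Homeo(X), for X the whole (compact metric) type, are partial maps
  g :: 'a \<rightharpoonup> 'a with open domain D_g = dom g and open range R_g = ran g,
  restricting to a homeomorphism D_g \<rightarrow> R_g.  Composition on natural domains is
  the map composition (map_comp h g), whose domain is g^{-1}(D_h).\<close>

definition phomeo :: "('a::topological_space \<rightharpoonup> 'a) \<Rightarrow> bool" where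
  "phomeo g \<longleftrightarrow> open (dom g) \<and> open (ran g) \<and>
     (\<exists>h. homeomorphism (dom g) (ran g) (\<lambda>x. the (g x)) h)"

definition pinv :: "('a \<rightharpoonup> 'a) \<Rightarrow> ('a \<rightharpoonup> 'a)" where
  "pinv g = (\<lambda>y. if y \<in> ran g then Some (THE x. g x = Some y) else None)"

definition pseudogroup :: "('a::topological_space \<rightharpoonup> 'a) set \<Rightarrow> bool" where
  "pseudogroup P \<longleftrightarrow>
     P \<subseteq> Collect phomeo \<and>
     Some \<in> P \<and>
     (\<forall>g\<in>P. \<forall>h\<in>P. h \<circ>\<^sub>m g \<in> P) \<and>
     (\<forall>g\<in>P. pinv g \<in> P) \<and>
     (\<forall>g\<in>P. \<forall>U. open U \<longrightarrow> g |` U \<in> P) \<and>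
     (\<forall>g. phomeo g \<longrightarrow>
        (\<forall>\<U>. (\<forall>U\<in>\<U>. open U) \<and> \<Union>\<U> = dom g \<and> (\<forall>U\<in>\<U>. g |` U \<in> P) \<longrightarrow> g \<in> P))"

inductive_set pwords :: "('a \<rightharpoonup> 'a) set \<Rightarrow> ('a \<rightharpoonup> 'a) set" for \<Gamma> where
  pw_id: "Some \<in> pwords \<Gamma>"
| pw_gen: "g \<in> \<Gamma> \<Longrightarrow> w \<in> pwords \<Gamma> \<Longrightarrow> g \<circ>\<^sub>m w \<in> pwords \<Gamma>"
| pw_inv: "g \<in> \<Gamma> \<Longrightarrow> w \<in> pwords \<Gamma> \<Longrightarrow> pinv g \<circ>\<^sub>m w \<in> pwords \<Gamma>"

definition generates :: "('a::topological_space \<rightharpoonup> 'a) set \<Rightarrow> ('a \<rightharpoonup> 'a) set \<Rightarrow> bool" where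
  "generates \<Gamma> P \<longleftrightarrow>
     \<Gamma> \<subseteq> Collect phomeo \<and>
     (\<Union>g\<in>\<Gamma>. dom g \<union> ran g) = UNIV \<and>
     P = {g. phomeo g \<and> (\<forall>x\<in>dom g. \<exists>U. open U \<and> x \<in> U \<and> U \<subseteq> dom g \<and>
                                   (\<exists>w\<in>pwords \<Gamma>. \<forall>y\<in>U. g y = w y))}"

definition finitely_generated :: "('a::topological_space \<rightharpoonup> 'a) set \<Rightarrow> bool" where
  "finitely_generated P \<longleftrightarrow> (\<exists>\<Gamma>. finite \<Gamma> \<and> generates \<Gamma> P)"

definition pconj :: "('a \<Rightarrow> 'b) \<Rightarrow> ('a \<rightharpoonup> 'a) \<Rightarrow> ('b \<rightharpoonup> 'b)" where
  "pconj \<phi> f = (\<lambda>y. map_option \<phi> (f (inv \<phi> y)))"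

definition strongly_isomorphic ::
  "('a::topological_space \<rightharpoonup> 'a) set \<Rightarrow> ('b::topological_space \<rightharpoonup> 'b) set \<Rightarrow> ('a \<Rightarrow> 'b) \<Rightarrow> bool" where
  "strongly_isomorphic G H \<phi> \<longleftrightarrow> (\<forall>f. phomeo f \<longrightarrow> (pconj \<phi> f \<in> H \<longleftrightarrow> f \<in> G))"

fun gamma_n :: "('a \<rightharpoonup> 'a) set \<Rightarrow> nat \<Rightarrow> ('a \<rightharpoonup> 'a) set" where
  "gamma_n \<Gamma> 0 = {Some}"
| "gamma_n \<Gamma> (Suc n) = {g \<circ>\<^sub>m h | g h. g \<in> \<Gamma> \<and> h \<in> gamma_n \<Gamma> n}"

definition bowen_ball :: "('a::metric_space \<rightharpoonup> 'a) set \<Rightarrow> nat \<Rightarrow> 'a \<Rightarrow> real \<Rightarrow> 'a set" where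
  "bowen_ball \<Gamma> n x \<epsilon> = {y. \<forall>g\<in>gamma_n \<Gamma> n. x \<in> dom g \<and> y \<in> dom g \<longrightarrow>
                                   dist (the (g x)) (the (g y)) < \<epsilon>}"

definition neglog :: "real \<Rightarrow> ereal" where
  "neglog p = (if p = 0 then \<infinity> else ereal (- ln p))"

definition lower_local_entropy :: "'a::metric_space measure \<Rightarrow> ('a \<rightharpoonup> 'a) set \<Rightarrow> 'a \<Rightarrow> ereal" where
  "lower_local_entropy \<nu> \<Gamma> x =
     Lim (at_right (0::real))
       (\<lambda>\<epsilon>. liminf (\<lambda>n. neglog (measure \<nu> (bowen_ball \<Gamma> n x \<epsilon>)) / ereal (real n)))"

end

theory Submission
  imports Defs
begin

definition gset :: "('a \<Rightarrow> 'b::metric_space) \<Rightarrow> ('a \<rightharpoonup> 'a) set \<Rightarrow> nat \<Rightarrow> 'a \<Rightarrow> real \<Rightarrow> 'a set" where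
  "gset f \<Gamma> n x \<epsilon> = {y. \<forall>g\<in>gamma_n \<Gamma> n. x \<in> dom g \<and> y \<in> dom g \<longrightarrow>
        dist (f (the (g x))) (f (the (g y))) < \<epsilon>}"

lemma bowen_gset: "bowen_ball \<Gamma> n x \<epsilon> = gset id \<Gamma> n x \<epsilon>"
  unfolding bowen_ball_def gset_def by simp

lemma gamma_n_cont:
  assumes "\<Gamma> \<subseteq> Collect phomeo"
  shows "g \<in> gamma_n \<Gamma> n \<Longrightarrow> open (dom g) \<and> continuous_on (dom g) (\<lambda>y. the (g y))"
proof (induction n arbitrary: g)
  case 0
  then show ?case by (simp add: continuous_on_id)
next
  case (Suc n)
  then obtain g1 h where g: "g = g1 \<circ>\<^sub>m h" and g1: "g1 \<in> \<Gamma>" and h: "h \<in> gamma_n \<Gamma> n" by auto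
  have ph: "phomeo g1" using g1 assms by auto
  have og1: "open (dom g1)" using ph unfolding phomeo_def by auto
  have cg1: "continuous_on (dom g1) (\<lambda>x. the (g1 x))"
    using ph unfolding phomeo_def homeomorphism_def by auto
  from Suc.IH[OF h] have oh: "open (dom h)" and ch: "continuous_on (dom h) (\<lambda>y. the (h y))" by auto
  have d: "dom g = dom h \<inter> (\<lambda>y. the (h y)) -` dom g1"
    unfolding g by (auto simp: map_comp_def dom_def split: option.splits)
  have o: "open (dom g)"
    unfolding d using ch oh og1 continuous_on_open_vimage by (metis Int_commute)
  have c1: "continuous_on (dom h \<inter> (\<lambda>y. the (h y)) -` dom g1) (\<lambda>y. the (g1 (the (h y))))"
    by (rule continuous_on_compose2[OF cg1 continuous_on_subset[OF ch]]) auto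
  have "continuous_on (dom g) (\<lambda>y. the (g y))"
    unfolding d
    apply (rule continuous_on_cong[THEN iffD1, OF refl _ c1])
    by (auto simp: g map_comp_def split: option.splits)
  with o show ?case by simp
qed

lemma gamma_n_finite: "finite \<Gamma> \<Longrightarrow> finite (gamma_n \<Gamma> n)"
  by (induction n) (auto intro: finite_image_set2)

lemma gset_borel:
  fixes f :: "'a::metric_space \<Rightarrow> 'b::metric_space"
  assumes "\<Gamma> \<subseteq> Collect phomeo" "finite \<Gamma>" "continuous_on UNIV f"
  shows "gset f \<Gamma> n x \<epsilon> \<in> sets borel"
proof -
  define A where "A g = {y. x \<in> dom g \<and> y \<in> dom g \<longrightarrow> dist (f (the (g x))) (f (the (g y))) < \<epsilon>}" for g
  have eq: "gset f \<Gamma> n x \<epsilon> = UNIV \<inter> (\<Inter>g\<in>gamma_n \<Gamma> n. A g)"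
    unfolding gset_def A_def by auto
  have Ab: "A g \<in> sets borel" if g: "g \<in> gamma_n \<Gamma> n" for g
  proof (cases "x \<in> dom g")
    case True
    from gamma_n_cont[OF assms(1) g] have o: "open (dom g)" and c: "continuous_on (dom g) (\<lambda>y. the (g y))" by auto
    have c2: "continuous_on (dom g) (\<lambda>y. f (the (g y)))"
      by (rule continuous_on_compose2[OF assms(3) c]) auto
    have op: "open ((\<lambda>y. f (the (g y))) -` ball (f (the (g x))) \<epsilon> \<inter> dom g)"
      using c2 o continuous_on_open_vimage by blast
    have "A g = - dom g \<union> ((\<lambda>y. f (the (g y))) -` ball (f (the (g x))) \<epsilon> \<inter> dom g)"
      unfolding A_def using True by (auto simp: ball_def)
    then show ?thesis using op o by (auto intro!: sets.Un borel_open borel_closed)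
  next
    case False
    then have "A g = UNIV" unfolding A_def by auto
    then show ?thesis by simp
  qed
  show ?thesis
  proof (cases "gamma_n \<Gamma> n = {}")
    case True then show ?thesis unfolding eq by simp
  next
    case False
    have "(\<Inter>g\<in>gamma_n \<Gamma> n. A g) \<in> sets borel"
      using Ab False gamma_n_finite[OF assms(2)] by (intro sets.finite_INT) auto
    then show ?thesis unfolding eq by simp
  qed
qed

lemma E_mono:
  assumes "finite_measure M" "\<And>n. S n \<in> sets M" "\<And>n. T n \<in> sets M" "\<And>n. S n \<subseteq> T n"
  shows "liminf (\<lambda>n. neglog (measure M (T n)) / ereal (real n))
       \<le> liminf (\<lambda>n. neglog (measure M (S n)) / ereal (real n))"
proof (rule Liminf_mono)
  show "\<forall>\<^sub>F n in sequentially. neglog (measure M (T n)) / ereal (real n)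
       \<le> neglog (measure M (S n)) / ereal (real n)"
    using eventually_ge_at_top[of "1::nat"]
  proof (rule eventually_mono)
    fix n :: nat assume n: "1 \<le> n"
    have le: "measure M (S n) \<le> measure M (T n)"
      using finite_measure.finite_measure_mono[OF assms(1) assms(4) assms(3)] .
    have "neglog (measure M (T n)) \<le> neglog (measure M (S n))"
    proof (cases "measure M (S n) = 0")
      case True then show ?thesis by (simp add: neglog_def)
    next
      case False
      then have p: "0 < measure M (S n)" using measure_nonneg[of M "S n"] by linarith
      then have "0 < measure M (T n)" using le by linarith
      then show ?thesis using p le False by (simp add: neglog_def)
    qed
    then show "neglog (measure M (T n)) / ereal (real n) \<le> neglog (measure M (S n)) / ereal (real n)"
      using n by (intro ereal_divide_right_mono) auto
  qed
qed

lemma lim_sup: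
  fixes f :: "real \<Rightarrow> ereal"
  assumes anti: "\<And>a b. 0 < a \<Longrightarrow> a \<le> b \<Longrightarrow> f b \<le> f a"
  shows "Lim (at_right 0) f = (SUP e\<in>{0<..}. f e)"
proof (rule tendsto_Lim[OF trivial_limit_at_right_real])
  show "(f \<longlongrightarrow> (SUP e\<in>{0<..}. f e)) (at_right 0)"
  proof (rule increasing_tendsto)
    show "\<forall>\<^sub>F n in at_right 0. f n \<le> (SUP e\<in>{0<..}. f e)"
      unfolding eventually_at_right_field
      by (intro exI[of _ 1]) (auto intro: SUP_upper)
    fix y assume "y < (SUP e\<in>{0<..}. f e)"
    then obtain e where e: "0 < e" "y < f e" by (auto simp: less_SUP_iff)
    show "\<forall>\<^sub>F n in at_right 0. y < f n"
      unfolding eventually_at_right_field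
      using e anti by (intro exI[of _ e]) (auto intro: less_le_trans)
  qed
qed

lemma lim_eq:
  fixes f F :: "real \<Rightarrow> ereal"
  assumes "\<And>a b. 0 < a \<Longrightarrow> a \<le> b \<Longrightarrow> f b \<le> f a"
    and "\<And>a b. 0 < a \<Longrightarrow> a \<le> b \<Longrightarrow> F b \<le> F a"
    and "\<And>e. 0 < e \<Longrightarrow> \<exists>d>0. F e \<le> f d"
    and "\<And>e. 0 < e \<Longrightarrow> \<exists>d>0. f e \<le> F d"
  shows "Lim (at_right 0) f = Lim (at_right 0) F"
proof -
  have "(SUP e\<in>{0<..}. f e) = (SUP e\<in>{0<..}. F e)"
  proof (rule antisym)
    show "(SUP e\<in>{0<..}. f e) \<le> (SUP e\<in>{0<..}. F e)"
    proof (rule SUP_least)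
      fix e :: real assume "e \<in> {0<..}"
      then obtain d where "d > 0" "f e \<le> F d" using assms(4) by auto
      then show "f e \<le> (SUP e\<in>{0<..}. F e)" by (auto intro: SUP_upper2)
    qed
    show "(SUP e\<in>{0<..}. F e) \<le> (SUP e\<in>{0<..}. f e)"
    proof (rule SUP_least)
      fix e :: real assume "e \<in> {0<..}"
      then obtain d where "d > 0" "F e \<le> f d" using assms(3) by auto
      then show "F e \<le> (SUP e\<in>{0<..}. f e)" by (auto intro: SUP_upper2)
    qed
  qed
  then show ?thesis using lim_sup[OF assms(1)] lim_sup[OF assms(2)] by simp
qed

lemma pconj_Some: "bij \<phi> \<Longrightarrow> pconj \<phi> Some = Some"
  unfolding pconj_def by (rule ext) (simp add: surj_f_inv_f[OF bij_is_surj])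

lemma pconj_comp: "bij \<phi> \<Longrightarrow> pconj \<phi> (g \<circ>\<^sub>m h) = pconj \<phi> g \<circ>\<^sub>m pconj \<phi> h"
  unfolding pconj_def by (rule ext) (auto simp: map_comp_def bij_is_inj split: option.splits)

lemma gamma_n_pconj: "bij \<phi> \<Longrightarrow> gamma_n (pconj \<phi> ` \<Gamma>) n = pconj \<phi> ` gamma_n \<Gamma> n"
proof (induction n)
  case 0 then show ?case by (simp add: pconj_Some)
next
  case (Suc n)
  show ?case
  proof
    show "gamma_n (pconj \<phi> ` \<Gamma>) (Suc n) \<subseteq> pconj \<phi> ` gamma_n \<Gamma> (Suc n)"
      using Suc by (auto simp: pconj_comp[OF Suc.prems, symmetric]) blast
    show "pconj \<phi> ` gamma_n \<Gamma> (Suc n) \<subseteq> gamma_n (pconj \<phi> ` \<Gamma>) (Suc n)"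
    proof
      fix z assume "z \<in> pconj \<phi> ` gamma_n \<Gamma> (Suc n)"
      then obtain a b where z: "z = pconj \<phi> (a \<circ>\<^sub>m b)" and a: "a \<in> \<Gamma>" and b: "b \<in> gamma_n \<Gamma> n" by auto
      have "pconj \<phi> b \<in> gamma_n (pconj \<phi> ` \<Gamma>) n" using Suc.IH[OF Suc.prems] b by auto
      then show "z \<in> gamma_n (pconj \<phi> ` \<Gamma>) (Suc n)"
        using a unfolding z pconj_comp[OF Suc.prems] by auto
    qed
  qed
qed

lemma bowen_pconj:
  assumes "bij \<phi>"
  shows "bowen_ball (pconj \<phi> ` \<Gamma>) n (\<phi> x) \<epsilon> = inv \<phi> -` gset \<phi> \<Gamma> n x \<epsilon>"
  unfolding bowen_ball_def gset_def gamma_n_pconj[OF assms]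
  by (auto simp: pconj_def dom_def bij_is_inj[OF assms])

theorem mainTheorem14:
  fixes G :: "('a::metric_space \<rightharpoonup> 'a) set" and H :: "('b::metric_space \<rightharpoonup> 'b) set"
    and \<phi> :: "'a \<Rightarrow> 'b" and G1 :: "('a \<rightharpoonup> 'a) set"
    and \<mu> :: "'a measure" and x :: 'a
  assumes "compact (UNIV :: 'a set)" and "compact (UNIV :: 'b set)"
    and "pseudogroup G" and "pseudogroup H"
    and "finitely_generated G" and "finitely_generated H"
    and "\<exists>\<psi>. homeomorphism UNIV UNIV \<phi> \<psi>"
    and "strongly_isomorphic G H \<phi>"
    and "finite G1" and "generates G1 G"
    and "prob_space \<mu>" and "sets \<mu> = sets borel"
  shows "lower_local_entropy \<mu> G1 x =
         lower_local_entropy (distr \<mu> borel \<phi>) (pconj \<phi> ` G1) (\<phi> x)"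
proof -
  obtain \<psi> where hom: "homeomorphism UNIV UNIV \<phi> \<psi>" using assms(7) by auto
  have pp: "\<And>y. \<psi> (\<phi> y) = y" and qq: "\<And>y. \<phi> (\<psi> y) = y"
    and cphi: "continuous_on UNIV \<phi>" and cpsi: "continuous_on UNIV \<psi>"
    using hom unfolding homeomorphism_def by auto
  have bij: "bij \<phi>" using pp qq by (metis bijI' )
  have invphi: "inv \<phi> = \<psi>" using pp qq by (rule inv_equality)
  have G1ph: "G1 \<subseteq> Collect phomeo" using assms(10) unfolding generates_def by auto
  have spc: "space \<mu> = UNIV" using sets_eq_imp_space_eq[OF assms(12)] by simp
  have fm: "finite_measure \<mu>" using assms(11) unfolding prob_space_def by auto
  have phim: "\<phi> \<in> measurable \<mu> borel"
    using borel_measurable_continuous_onI[OF cphi] measurable_cong_sets[OF assms(12) refl] by blast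
  have psim: "\<psi> \<in> borel_measurable borel" using borel_measurable_continuous_onI[OF cpsi] .
  have cid: "continuous_on UNIV (id :: 'a \<Rightarrow> 'a)" by (simp add: continuous_on_id)
  have Bm: "gset id G1 n x e \<in> sets \<mu>" for n e
    using gset_borel[OF G1ph assms(9) cid] assms(12) by simp
  have Cm: "gset \<phi> G1 n x e \<in> sets \<mu>" for n e
    using gset_borel[OF G1ph assms(9) cphi] assms(12) by simp
  have meq: "measure (distr \<mu> borel \<phi>) (bowen_ball (pconj \<phi> ` G1) n (\<phi> x) e)
      = measure \<mu> (gset \<phi> G1 n x e)" for n e
  proof -
    have b: "\<psi> -` gset \<phi> G1 n x e \<in> sets borel"
      using measurable_sets[OF psim gset_borel[OF G1ph assms(9) cphi]] by simp
    have "measure (distr \<mu> borel \<phi>) (\<psi> -` gset \<phi> G1 n x e)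
        = measure \<mu> (\<phi> -` \<psi> -` gset \<phi> G1 n x e \<inter> space \<mu>)"
      by (rule measure_distr[OF phim b])
    also have "\<phi> -` \<psi> -` gset \<phi> G1 n x e \<inter> space \<mu> = gset \<phi> G1 n x e"
      using pp spc by auto
    finally show ?thesis unfolding bowen_pconj[OF bij] invphi .
  qed
  define f where "f e = liminf (\<lambda>n. neglog (measure \<mu> (gset id G1 n x e)) / ereal (real n))" for e
  define F where "F e = liminf (\<lambda>n. neglog (measure \<mu> (gset \<phi> G1 n x e)) / ereal (real n))" for e
  have L: "lower_local_entropy \<mu> G1 x = Lim (at_right 0) f"
    unfolding lower_local_entropy_def f_def bowen_gset ..
  have R: "lower_local_entropy (distr \<mu> borel \<phi>) (pconj \<phi> ` G1) (\<phi> x) = Lim (at_right 0) F"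
    unfolding lower_local_entropy_def F_def meq ..
  have ucphi: "uniformly_continuous_on UNIV \<phi>"
    using compact_uniformly_continuous[OF cphi assms(1)] .
  have ucpsi: "uniformly_continuous_on UNIV \<psi>"
    using compact_uniformly_continuous[OF cpsi assms(2)] .
  show ?thesis unfolding L R
  proof (rule lim_eq)
    fix a b :: real assume "0 < a" "a \<le> b"
    show "f b \<le> f a" unfolding f_def
      by (rule E_mono[OF fm Bm Bm]) (use \<open>a \<le> b\<close> in \<open>auto simp: gset_def\<close>)
    show "F b \<le> F a" unfolding F_def
      by (rule E_mono[OF fm Cm Cm]) (use \<open>a \<le> b\<close> in \<open>auto simp: gset_def\<close>)
  next
    fix e :: real assume e: "0 < e"
    then obtain d where d: "d > 0" "\<And>u v. dist u v < d \<Longrightarrow> dist (\<phi> u) (\<phi> v) < e"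
      using ucphi unfolding uniformly_continuous_on_def by (metis UNIV_I dist_commute)
    have "F e \<le> f d" unfolding F_def f_def
      by (rule E_mono[OF fm Bm Cm]) (auto simp: gset_def intro!: d(2))
    then show "\<exists>d>0. F e \<le> f d" using d(1) by auto
  next
    fix e :: real assume e: "0 < e"
    then obtain d where d: "d > 0" "\<And>u v. dist u v < d \<Longrightarrow> dist (\<psi> u) (\<psi> v) < e"
      using ucpsi unfolding uniformly_continuous_on_def by (metis UNIV_I dist_commute)
    have d2: "dist (\<phi> u) (\<phi> v) < d \<Longrightarrow> dist u v < e" for u v
      using d(2)[of "\<phi> u" "\<phi> v"] pp by simp
    have "f e \<le> F d" unfolding F_def f_def
      by (rule E_mono[OF fm Cm Bm]) (auto simp: gset_def intro!: d2)
    then show "\<exists>d>0. f e \<le> F d" using d(1) by auto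
  qed
qed

end
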